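(* Let $K$ be a field and let $T$ be a tree with $n\ge 1$ edges. Then its cut ideal $I_T$ is minimally generated by $2\cdot 4^{n-1} + 2^{n-1} - 3^n$ quadrics.
   Context: For a finite simple graph $G$ with vertex set $V(G)$ and edge set $E(G)$, an unordered partition $A|B$ of $V(G)$ (into two sets, one of which may be empty) defines the cut $Cut(A|B)$, the set of edges with one endpoint in $A$ and the other in $B$. The cut ideal $I_G$ is the kernel of the $K$-algebra homomorphism $\phi_G: K[q_{A|B} : A|B \text{ unordered partition of } V(G)] \to K[s_{ij}, t_{ij} : \{i,j\} \in E(G)]$, $q_{A|B} \mapsto \prod_{\{i,j\}\in Cut(A|B)} s_{ij} \prod_{\{i,j\}\in E(G)\setminus Cut(A|B)} t_{ij}$. For a tree with $n$ edges this polynomial ring has $2^n$ variables. *)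

theory Defs
  imports Main "HOL-Library.Poly_Mapping"
begin

definition simple_graph :: "'v set \<Rightarrow> 'v set set \<Rightarrow> bool" where
  "simple_graph V E \<longleftrightarrow> finite V \<and>
     (\<forall>e\<in>E. \<exists>u v. u \<noteq> v \<and> u \<in> V \<and> v \<in> V \<and> e = {u, v})"

definition adj :: "'v set set \<Rightarrow> 'v \<Rightarrow> 'v \<Rightarrow> bool" where
  "adj E u v \<longleftrightarrow> u \<noteq> v \<and> {u, v} \<in> E"

definition connected_graph :: "'v set \<Rightarrow> 'v set set \<Rightarrow> bool" where
  "connected_graph V E \<longleftrightarrow> (\<forall>u\<in>V. \<forall>v\<in>V. (adj E)\<^sup>*\<^sup>* u v)"

definition is_cycle :: "'v set set \<Rightarrow> 'v list \<Rightarrow> bool" where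
  "is_cycle E cs \<longleftrightarrow> length cs \<ge> 3 \<and> distinct cs \<and>
     (\<forall>i. Suc i < length cs \<longrightarrow> adj E (cs ! i) (cs ! Suc i)) \<and>
     adj E (last cs) (hd cs)"

definition is_tree :: "'v set \<Rightarrow> 'v set set \<Rightarrow> bool" where
  "is_tree V E \<longleftrightarrow> simple_graph V E \<and> V \<noteq> {} \<and> connected_graph V E \<and>
     \<not> (\<exists>cs. set cs \<subseteq> V \<and> is_cycle E cs)"

definition unordered_partitions :: "'v set \<Rightarrow> 'v set set set" where
  "unordered_partitions V = {{A, V - A} | A. A \<subseteq> V}"

definition cut :: "'v set set \<Rightarrow> 'v set set \<Rightarrow> 'v set set" where
  "cut E P = {e \<in> E. \<forall>X\<in>P. e \<inter> X \<noteq> {}}"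

type_synonym ('x, 'k) mpoly = "('x \<Rightarrow>\<^sub>0 nat) \<Rightarrow>\<^sub>0 'k"

definition mvar :: "'x \<Rightarrow> ('x, 'k::comm_ring_1) mpoly" where
  "mvar x = Poly_Mapping.single (Poly_Mapping.single x 1) 1"

definition poly_in :: "'x set \<Rightarrow> ('x, 'k::zero) mpoly \<Rightarrow> bool" where
  "poly_in X p \<longleftrightarrow> (\<forall>m\<in>Poly_Mapping.keys p. Poly_Mapping.keys m \<subseteq> X)"

definition mdeg :: "('x \<Rightarrow>\<^sub>0 nat) \<Rightarrow> nat" where
  "mdeg m = (\<Sum>x\<in>Poly_Mapping.keys m. Poly_Mapping.lookup m x)"

definition quadric :: "('x, 'k::zero) mpoly \<Rightarrow> bool" where
  "quadric p \<longleftrightarrow> p \<noteq> 0 \<and> (\<forall>m\<in>Poly_Mapping.keys p. mdeg m = 2)"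

definition peval :: "('x \<Rightarrow> ('y, 'k::comm_ring_1) mpoly) \<Rightarrow> ('x, 'k) mpoly \<Rightarrow> ('y, 'k) mpoly" where
  "peval img p = (\<Sum>m\<in>Poly_Mapping.keys p.
      Poly_Mapping.single 0 (Poly_Mapping.lookup p m) *
      (\<Prod>x\<in>Poly_Mapping.keys m. img x ^ Poly_Mapping.lookup m x))"

definition gen_ideal :: "'x set \<Rightarrow> ('x, 'k::comm_ring_1) mpoly set \<Rightarrow> ('x, 'k) mpoly set" where
  "gen_ideal X G = {p. \<exists>c. (\<forall>g\<in>G. poly_in X (c g)) \<and> p = (\<Sum>g\<in>G. c g * g)}"

definition minimally_generated_by_quadrics ::
    "'x set \<Rightarrow> ('x, 'k::comm_ring_1) mpoly set \<Rightarrow> nat \<Rightarrow> bool" where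
  "minimally_generated_by_quadrics X I N \<longleftrightarrow>
     (\<exists>G. finite G \<and> card G = N \<and> (\<forall>g\<in>G. quadric g \<and> poly_in X g) \<and> gen_ideal X G = I) \<and>
     (\<forall>G. finite G \<and> (\<forall>g\<in>G. poly_in X g) \<and> gen_ideal X G = I \<longrightarrow> N \<le> card G)"

text \<open>Variables of the target ring: (e, True) is s_e, (e, False) is t_e.\<close>
definition cut_image :: "'v set set \<Rightarrow> 'v set set \<Rightarrow> ('v set \<times> bool, 'k::comm_ring_1) mpoly" where
  "cut_image E P = (\<Prod>e\<in>cut E P. mvar (e, True)) * (\<Prod>e\<in>E - cut E P. mvar (e, False))"

definition cut_ideal :: "'v set \<Rightarrow> 'v set set \<Rightarrow> ('v set set, 'k::comm_ring_1) mpoly set" where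
  "cut_ideal V E = {p. poly_in (unordered_partitions V) p \<and>
                       peval (cut_image E :: 'v set set \<Rightarrow> ('v set \<times> bool, 'k) mpoly) p = 0}"

end

theory Submission
  imports Defs "HOL.Vector_Spaces" "HOL-Library.FuncSet"
begin


definition sd :: "'a set \<Rightarrow> 'a set \<Rightarrow> 'a set" where "sd A B = (A - B) \<union> (B - A)"

lemma edge_obtain:
  assumes "simple_graph V E" "e \<in> E"
  obtains u v where "u \<noteq> v" "u \<in> V" "v \<in> V" "e = {u, v}"
  using assms unfolding simple_graph_def by blast

lemma cut_char:
  assumes "simple_graph V E" "u \<in> V" "v \<in> V" "{u,v} \<in> E"
  shows "{u,v} \<in> cut E {A, V - A} \<longleftrightarrow> ((u \<in> A) \<noteq> (v \<in> A))"
  using assms unfolding cut_def by auto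

lemma cut_sd:
  assumes "simple_graph V E"
  shows "cut E {sd A B, V - sd A B} = sd (cut E {A, V - A}) (cut E {B, V - B})"
proof (rule set_eqI)
  fix e
  show "e \<in> cut E {sd A B, V - sd A B} \<longleftrightarrow> e \<in> sd (cut E {A, V - A}) (cut E {B, V - B})"
  proof (cases "e \<in> E")
    case True
    then obtain u v where uv: "u \<noteq> v" "u \<in> V" "v \<in> V" "e = {u, v}"
      using edge_obtain[OF assms] by blast
    show ?thesis using cut_char[OF assms uv(2,3), of "sd A B"] cut_char[OF assms uv(2,3), of A]
        cut_char[OF assms uv(2,3), of B] True uv unfolding sd_def by auto
  next
    case False then show ?thesis unfolding sd_def cut_def by auto
  qed
qed

lemma cut_subset: "cut E P \<subseteq> E" unfolding cut_def by auto

lemma connected_cut_empty: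
  assumes sg: "simple_graph V E" and con: "connected_graph V E" and C: "C \<subseteq> V"
    and ce: "cut E {C, V - C} = {}"
  shows "C = {} \<or> C = V"
proof (rule ccontr)
  assume "\<not> (C = {} \<or> C = V)"
  then obtain u v where u: "u \<in> C" and v: "v \<in> V" "v \<notin> C" using C by blast
  have "(adj E)\<^sup>*\<^sup>* u v" using con u v C unfolding connected_graph_def by blast
  then have "v \<in> C"
  proof (induction rule: rtranclp_induct)
    case base then show ?case using u .
  next
    case (step y z)
    then have yz: "y \<noteq> z" "{y,z} \<in> E" unfolding adj_def by auto
    obtain a b where ab: "a \<noteq> b" "a \<in> V" "b \<in> V" "{y,z} = {a, b}" using edge_obtain[OF sg yz(2)] by blast
    have yV: "y \<in> V" "z \<in> V" using ab by auto
    have "{y,z} \<notin> cut E {C, V - C}" using ce by auto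
    then show ?case using cut_char[OF sg yV yz(2), of C] step by auto
  qed
  then show False using v by blast
qed

lemma path_exists:
  assumes "R\<^sup>*\<^sup>* a b"
  shows "\<exists>xs. xs \<noteq> [] \<and> hd xs = a \<and> last xs = b \<and> distinct xs \<and> successively R xs"
  using assms
proof (induction rule: converse_rtranclp_induct)
  case base
  then show ?case by (intro exI[of _ "[b]"]) auto
next
  case (step y z)
  then obtain xs where xs: "xs \<noteq> []" "hd xs = z" "last xs = b" "distinct xs" "successively R xs" by blast
  show ?case
  proof (cases "y \<in> set xs")
    case True
    then obtain ys zs where yz: "xs = ys @ y # zs" by (meson split_list)
    have "successively R (y # zs)" using xs(5) yz by (simp add: successively_append_iff)
    moreover have "last (y # zs) = b" using xs(3) yz by simp
    moreover have "distinct (y # zs)" using xs(4) yz by simp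
    ultimately show ?thesis by (intro exI[of _ "y # zs"]) auto
  next
    case False
    have "successively R (y # xs)" using xs step(1) by (cases xs) auto
    then show ?thesis using False xs by (intro exI[of _ "y # xs"]) auto
  qed
qed

lemma successively_nth:
  "successively R xs \<Longrightarrow> Suc i < length xs \<Longrightarrow> R (xs ! i) (xs ! Suc i)"
proof (induction xs arbitrary: i)
  case (Cons x xs)
  show ?case
  proof (cases i)
    case 0 then show ?thesis using Cons.prems by (cases xs) auto
  next
    case (Suc j) then show ?thesis using Cons by (cases xs) auto
  qed
qed auto


lemma successively_reach:
  "successively R xs \<Longrightarrow> xs \<noteq> [] \<Longrightarrow> x \<in> set xs \<Longrightarrow> R\<^sup>*\<^sup>* (hd xs) x"
proof (induction xs arbitrary: x)
  case (Cons y ys)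
  show ?case
  proof (cases "x = y")
    case False
    then have ys: "ys \<noteq> []" "x \<in> set ys" using Cons.prems by auto
    then have "R y (hd ys)" "successively R ys" using Cons.prems(1) by (cases ys; auto)+
    then show ?thesis using Cons.IH[OF _ ys] by (simp add: converse_rtranclp_into_rtranclp)
  qed simp
qed simp

lemma tree_finite_E:
  assumes "simple_graph V E" shows "finite E"
proof -
  have "E \<subseteq> Pow V" using assms unfolding simple_graph_def by fastforce
  moreover have "finite (Pow V)" using assms unfolding simple_graph_def by simp
  ultimately show ?thesis by (rule finite_subset)
qed

lemma single_edge_cut:
  assumes T: "is_tree V E" and e: "e \<in> E"
  shows "\<exists>C\<subseteq>V. cut E {C, V - C} = {e}"
proof -
  have sg: "simple_graph V E" using T unfolding is_tree_def by blast
  obtain u v where uv: "u \<noteq> v" "u \<in> V" "v \<in> V" "e = {u, v}" using edge_obtain[OF sg e] by blast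
  define R where "R = adj (E - {e})"
  define C where "C = {w. R\<^sup>*\<^sup>* v w}"
  have RV: "R y z \<Longrightarrow> z \<in> V" for y z
  proof -
    assume "R y z"
    then have "{y,z} \<in> E" unfolding R_def adj_def by auto
    then obtain a b where "a \<in> V" "b \<in> V" "{y,z} = {a,b}" using edge_obtain[OF sg] by metis
    then show "z \<in> V" by (auto simp: doubleton_eq_iff)
  qed
  have CV: "C \<subseteq> V"
  proof
    fix w assume "w \<in> C"
    then have "R\<^sup>*\<^sup>* v w" unfolding C_def by blast
    then show "w \<in> V" by (induction rule: rtranclp_induct) (use uv RV in auto)
  qed
  have vC: "v \<in> C" unfolding C_def by simp
  have uC: "u \<notin> C"
  proof
    assume "u \<in> C"
    then have "R\<^sup>*\<^sup>* v u" unfolding C_def by blast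
    then obtain xs where xs: "xs \<noteq> []" "hd xs = v" "last xs = u" "distinct xs" "successively R xs"
      using path_exists by metis
    have setV: "set xs \<subseteq> V"
    proof
      fix x assume "x \<in> set xs"
      then have "R\<^sup>*\<^sup>* v x" using successively_reach[OF xs(5,1)] xs(2) by blast
      then show "x \<in> V" by (induction rule: rtranclp_induct) (use uv RV in auto)
    qed
    have len3: "length xs \<ge> 3"
    proof (cases xs)
      case Nil then show ?thesis using xs by simp
    next
      case (Cons a ys)
      show ?thesis
      proof (cases ys)
        case Nil then show ?thesis using xs uv Cons by simp
      next
        case (Cons b zs)
        show ?thesis
        proof (cases zs)
          case Nil
          then have "R v u" using xs Cons \<open>xs = a # ys\<close> by simp
          then show ?thesis unfolding R_def adj_def using uv by auto
        next
          case (Cons c ws) then show ?thesis using \<open>xs = a # ys\<close> \<open>ys = b # zs\<close> by simp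
        qed
      qed
    qed
    have "successively (adj E) xs"
      using xs(5) by (rule successively_mono) (auto simp: R_def adj_def)
    then have "is_cycle E xs"
    proof -
      have "adj E (last xs) (hd xs)" using xs(2,3) uv e by (simp add: adj_def insert_commute)
      moreover have "\<forall>i. Suc i < length xs \<longrightarrow> adj E (xs ! i) (xs ! Suc i)"
        using successively_nth[OF \<open>successively (adj E) xs\<close>] by blast
      ultimately show ?thesis unfolding is_cycle_def using len3 xs(4) by simp
    qed
    then show False using T setV unfolding is_tree_def by blast
  qed
  have "cut E {C, V - C} = {e}"
  proof (rule set_eqI)
    fix f
    show "f \<in> cut E {C, V - C} \<longleftrightarrow> f \<in> {e}"
    proof (cases "f \<in> E")
      case False then show ?thesis using e unfolding cut_def by auto
    next
      case True
      obtain a b where ab: "a \<noteq> b" "a \<in> V" "b \<in> V" "f = {a, b}" by (rule edge_obtain[OF sg True])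
      have abE: "{a,b} \<in> E" using True ab(4) by simp
      have cc: "f \<in> cut E {C, V - C} \<longleftrightarrow> ((a \<in> C) \<noteq> (b \<in> C))"
        using cut_char[OF sg ab(2,3) abE] unfolding ab(4) .
      show ?thesis
      proof (cases "f = e")
        case True
        then have "{a,b} = {u,v}" using ab(4) uv(4) by simp
        then have "(a = u \<and> b = v) \<or> (a = v \<and> b = u)" by (simp add: doubleton_eq_iff)
        then have "(a \<in> C) \<noteq> (b \<in> C)" using vC uC by blast
        then show ?thesis using cc True by simp
      next
        case False
        have "{a,b} \<in> E - {e}" "{b,a} \<in> E - {e}" using abE False ab(4) by (simp_all add: insert_commute)
        then have "R a b" "R b a" unfolding R_def adj_def using ab(1) by auto
        then have "(a \<in> C) = (b \<in> C)" unfolding C_def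
          using rtranclp.rtrancl_into_rtrancl[of R v a b] rtranclp.rtrancl_into_rtrancl[of R v b a] by blast
        then show ?thesis using cc False by simp
      qed
    qed
  qed
  then show ?thesis using CV by blast
qed

lemma cut_surj:
  assumes T: "is_tree V E" and F: "F \<subseteq> E"
  shows "\<exists>A\<subseteq>V. cut E {A, V - A} = F"
proof -
  have sg: "simple_graph V E" using T unfolding is_tree_def by blast
  have "finite F" using F tree_finite_E[OF sg] finite_subset by blast
  then show ?thesis using F
  proof (induction rule: finite_subset_induct)
    case empty
    then show ?case by (intro exI[of _ "{}"]) (auto simp: cut_def)
  next
    case (insert a F)
    then obtain A where A: "A \<subseteq> V" "cut E {A, V - A} = F" by blast
    obtain C where C: "C \<subseteq> V" "cut E {C, V - C} = {a}" using single_edge_cut[OF T insert(2)] by blast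
    have "cut E {sd A C, V - sd A C} = insert a F"
      using cut_sd[OF sg, of A C] A C insert(3) unfolding sd_def by auto
    moreover have "sd A C \<subseteq> V" using A C unfolding sd_def by auto
    ultimately show ?case by blast
  qed
qed

lemma cut_bij:
  assumes T: "is_tree V E"
  shows "bij_betw (cut E) (unordered_partitions V) (Pow E)"
proof -
  have sg: "simple_graph V E" and con: "connected_graph V E" using T unfolding is_tree_def by blast+
  show ?thesis
  proof (rule bij_betw_imageI)
    show "inj_on (cut E) (unordered_partitions V)"
    proof (rule inj_onI)
      fix P Q assume P: "P \<in> unordered_partitions V" and Q: "Q \<in> unordered_partitions V"
        and eq: "cut E P = cut E Q"
      obtain A where A: "A \<subseteq> V" "P = {A, V - A}" using P unfolding unordered_partitions_def by blast
      obtain B where B: "B \<subseteq> V" "Q = {B, V - B}" using Q unfolding unordered_partitions_def by blast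
      have "cut E {sd A B, V - sd A B} = {}" using cut_sd[OF sg, of A B] eq A B unfolding sd_def by auto
      moreover have "sd A B \<subseteq> V" using A B unfolding sd_def by auto
      ultimately have "sd A B = {} \<or> sd A B = V" using connected_cut_empty[OF sg con] by blast
      then show "P = Q"
      proof
        assume "sd A B = {}" then have "A = B" unfolding sd_def by auto
        then show ?thesis using A B by simp
      next
        assume "sd A B = V" then have "B = V - A" using A B unfolding sd_def by auto
        then show ?thesis using A B by (auto simp: Diff_Diff_Int Int_absorb1)
      qed
    qed
    show "cut E ` unordered_partitions V = Pow E"
    proof
      show "cut E ` unordered_partitions V \<subseteq> Pow E" using cut_subset by blast
      show "Pow E \<subseteq> cut E ` unordered_partitions V"
      proof
        fix F assume "F \<in> Pow E"
        then obtain A where "A \<subseteq> V" "cut E {A, V - A} = F" using cut_surj[OF T] by blast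
        then show "F \<in> cut E ` unordered_partitions V" unfolding unordered_partitions_def by blast
      qed
    qed
  qed
qed


definition Psi :: "('a \<Rightarrow> 'b) \<Rightarrow> ('a \<Rightarrow>\<^sub>0 'c::comm_ring_1) \<Rightarrow> ('b \<Rightarrow>\<^sub>0 'c)" where
  "Psi f p = (\<Sum>m\<in>Poly_Mapping.keys p. Poly_Mapping.single (f m) (Poly_Mapping.lookup p m))"

lemma lookup_single_if: "Poly_Mapping.lookup (Poly_Mapping.single k v) k' = (if k = k' then v else 0)"
  by (simp add: lookup_single when_def)

lemma poly_expand: "p = (\<Sum>a\<in>Poly_Mapping.keys p. Poly_Mapping.single a (Poly_Mapping.lookup p a))"
proof (rule poly_mapping_eqI)
  fix k
  show "Poly_Mapping.lookup p k = Poly_Mapping.lookup (\<Sum>a\<in>Poly_Mapping.keys p. Poly_Mapping.single a (Poly_Mapping.lookup p a)) k"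
    by (simp add: lookup_sum lookup_single_if in_keys_iff)
qed

lemma Psi_superset:
  assumes "finite S" "Poly_Mapping.keys p \<subseteq> S"
  shows "Psi f p = (\<Sum>m\<in>S. Poly_Mapping.single (f m) (Poly_Mapping.lookup p m))"
  unfolding Psi_def using assms
  by (intro sum.mono_neutral_left) (auto simp: in_keys_iff)

lemma Psi_add: "Psi f (p + q) = Psi f p + Psi f q"
proof -
  let ?S = "Poly_Mapping.keys p \<union> Poly_Mapping.keys q"
  have "Psi f (p + q) = (\<Sum>m\<in>?S. Poly_Mapping.single (f m) (Poly_Mapping.lookup (p+q) m))"
    using keys_add[of p q] by (intro Psi_superset) auto
  also have "\<dots> = (\<Sum>m\<in>?S. Poly_Mapping.single (f m) (Poly_Mapping.lookup p m))
                 + (\<Sum>m\<in>?S. Poly_Mapping.single (f m) (Poly_Mapping.lookup q m))"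
    by (simp add: lookup_add single_add sum.distrib)
  also have "\<dots> = Psi f p + Psi f q"
    by (subst (1 2) Psi_superset[of ?S]) auto
  finally show ?thesis .
qed

lemma Psi_zero [simp]: "Psi f 0 = 0" unfolding Psi_def by simp

lemma Psi_single [simp]: "Psi f (Poly_Mapping.single a c) = Poly_Mapping.single (f a) c"
  unfolding Psi_def by simp

lemma Psi_sum: "Psi f (\<Sum>i\<in>I. g i) = (\<Sum>i\<in>I. Psi f (g i))"
  by (induction I rule: infinite_finite_induct) (auto simp: Psi_add)

lemma Psi_uminus: "Psi f (- p) = - Psi f p"
proof -
  have "Psi f (-p) + Psi f p = 0" by (simp flip: Psi_add)
  then show ?thesis by (simp add: eq_neg_iff_add_eq_0)
qed

lemma Psi_diff: "Psi f (p - q) = Psi f p - Psi f q"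
  using Psi_add[of f p "-q"] by (simp add: Psi_uminus)

lemma mult_expand:
  "p * q = (\<Sum>a\<in>Poly_Mapping.keys p. \<Sum>b\<in>Poly_Mapping.keys q.
      Poly_Mapping.single (a + b) (Poly_Mapping.lookup p a * Poly_Mapping.lookup q b))"
proof -
  have "p * q = (\<Sum>a\<in>Poly_Mapping.keys p. Poly_Mapping.single a (Poly_Mapping.lookup p a)) *
                (\<Sum>b\<in>Poly_Mapping.keys q. Poly_Mapping.single b (Poly_Mapping.lookup q b))"
    by (subst (1) poly_expand[of p], subst (1) poly_expand[of q]) (rule refl)
  also have "\<dots> = (\<Sum>a\<in>Poly_Mapping.keys p. \<Sum>b\<in>Poly_Mapping.keys q.
      Poly_Mapping.single (a + b) (Poly_Mapping.lookup p a * Poly_Mapping.lookup q b))"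
    by (simp add: sum_product mult_single)
  finally show ?thesis .
qed

lemma lookup_mult_expand:
  "Poly_Mapping.lookup (p * q) m = (\<Sum>a\<in>Poly_Mapping.keys p. \<Sum>b\<in>Poly_Mapping.keys q.
      (if a + b = m then Poly_Mapping.lookup p a * Poly_Mapping.lookup q b else 0))"
  by (subst mult_expand) (simp add: lookup_sum lookup_single_if)

lemma Psi_mult:
  assumes add: "\<And>a b. f (a + b) = f a + f b"
  shows "Psi f (p * q) = Psi f p * Psi f q"
proof -
  have "Psi f (p * q) = (\<Sum>a\<in>Poly_Mapping.keys p. \<Sum>b\<in>Poly_Mapping.keys q.
      Poly_Mapping.single (f a + f b) (Poly_Mapping.lookup p a * Poly_Mapping.lookup q b))"
    by (subst mult_expand) (simp add: Psi_sum add)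
  also have "\<dots> = Psi f p * Psi f q"
    unfolding Psi_def by (simp add: sum_product mult_single)
  finally show ?thesis .
qed

definition rep :: "nat \<Rightarrow> ('y \<Rightarrow>\<^sub>0 nat) \<Rightarrow> ('y \<Rightarrow>\<^sub>0 nat)" where
  "rep k a = (\<Sum>i<k. a)"

lemma rep_0 [simp]: "rep 0 a = 0" unfolding rep_def by simp

lemma rep_add: "rep (k + l) a = rep k a + rep l a"
  by (induction l) (simp_all add: rep_def add.assoc)

lemma lookup_rep: "Poly_Mapping.lookup (rep k a) y = k * Poly_Mapping.lookup a y"
  unfolding rep_def by (simp add: lookup_sum)

lemma prod_single:
  "(\<Prod>a\<in>A. Poly_Mapping.single (f a) (1::'k::comm_ring_1)) = Poly_Mapping.single (\<Sum>a\<in>A. f a) 1"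
  by (induction A rule: infinite_finite_induct) (simp_all add: mult_single)

lemma pow_single:
  "Poly_Mapping.single a (1::'k::comm_ring_1) ^ k = Poly_Mapping.single (rep k a) 1"
  by (induction k) (simp_all add: mult_single rep_def add.commute)

definition psi :: "'v set set \<Rightarrow> 'v set set \<Rightarrow> ('v set \<times> bool) \<Rightarrow>\<^sub>0 nat" where
  "psi E P = (\<Sum>e\<in>cut E P. Poly_Mapping.single (e, True) 1) + (\<Sum>e\<in>E - cut E P. Poly_Mapping.single (e, False) 1)"

definition phi :: "'v set set \<Rightarrow> ('v set set \<Rightarrow>\<^sub>0 nat) \<Rightarrow> ('v set \<times> bool) \<Rightarrow>\<^sub>0 nat" where
  "phi E m = (\<Sum>x\<in>Poly_Mapping.keys m. rep (Poly_Mapping.lookup m x) (psi E x))"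

lemma phi_add: "phi E (a + b) = phi E a + phi E b"
  unfolding phi_def by (rule setsum_keys_plus_distrib) (simp_all add: rep_add)

lemma phi_superset:
  assumes "finite S" "Poly_Mapping.keys m \<subseteq> S"
  shows "phi E m = (\<Sum>x\<in>S. rep (Poly_Mapping.lookup m x) (psi E x))"
  unfolding phi_def using assms by (intro sum.mono_neutral_left) (auto simp: in_keys_iff)

lemma phi_single [simp]: "phi E (Poly_Mapping.single P 1) = psi E P"
  unfolding phi_def by (simp add: rep_def)

lemma phi_single' [simp]: "phi E (Poly_Mapping.single P (Suc 0)) = psi E P"
  using phi_single[of E P] by simp

lemma phi_zero [simp]: "phi E 0 = 0"
  unfolding phi_def by simp

lemma cut_image_single:
  "(cut_image E P :: ('v set \<times> bool, 'k::comm_ring_1) mpoly) = Poly_Mapping.single (psi E P) 1"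
  unfolding cut_image_def psi_def mvar_def by (simp add: prod_single mult_single)

lemma peval_Psi:
  "peval (cut_image E :: 'v set set \<Rightarrow> ('v set \<times> bool, 'k::comm_ring_1) mpoly) p = Psi (phi E) p"
  unfolding peval_def Psi_def
proof (rule sum.cong[OF refl])
  fix m
  have "(\<Prod>x\<in>Poly_Mapping.keys m. (cut_image E x :: ('v set \<times> bool, 'k) mpoly) ^ Poly_Mapping.lookup m x)
        = (\<Prod>x\<in>Poly_Mapping.keys m. Poly_Mapping.single (rep (Poly_Mapping.lookup m x) (psi E x)) 1)"
    by (simp add: cut_image_single pow_single)
  also have "\<dots> = Poly_Mapping.single (phi E m) 1" by (simp add: prod_single phi_def)
  finally show "Poly_Mapping.single 0 (Poly_Mapping.lookup p m) *
     (\<Prod>x\<in>Poly_Mapping.keys m. (cut_image E x :: ('v set \<times> bool, 'k) mpoly) ^ Poly_Mapping.lookup m x) =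
     Poly_Mapping.single (phi E m) (Poly_Mapping.lookup p m)"
    by (simp add: mult_single)
qed


abbreviation lk where "lk \<equiv> Poly_Mapping.lookup"
abbreviation ks where "ks \<equiv> Poly_Mapping.keys"
abbreviation sg where "sg \<equiv> Poly_Mapping.single"

lemma mdeg_add: "mdeg (a + b) = mdeg a + mdeg b"
  unfolding mdeg_def by (rule setsum_keys_plus_distrib) auto

lemma mdeg_single [simp]: "mdeg (sg P 1) = 1"
  unfolding mdeg_def by simp

lemma mdeg_single' [simp]: "mdeg (sg P (Suc 0)) = 1" using mdeg_single[of P] by simp

lemma mdeg_zero [simp]: "mdeg 0 = 0"
  unfolding mdeg_def by simp

lemma mdeg_eq_0: "mdeg m = 0 \<longleftrightarrow> m = 0"
proof
  assume "mdeg m = 0"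
  then have "\<forall>x\<in>ks m. lk m x = 0" unfolding mdeg_def by simp
  then have "\<forall>x. lk m x = 0" by (auto simp: in_keys_iff)
  then show "m = 0" by (intro poly_mapping_eqI) simp
qed simp

lemma keys_add_nat: "ks (a + b) = ks a \<union> ks (b :: 'a \<Rightarrow>\<^sub>0 nat)"
  by (auto simp: in_keys_iff lookup_add)

lemma mon_decomp:
  assumes "P \<in> ks m"
  shows "m = sg P 1 + (m - sg P 1)" "ks (m - sg P 1) \<subseteq> ks m" "mdeg (m - sg P 1) + 1 = mdeg m"
proof -
  show 1: "m = sg P 1 + (m - sg P 1)"
    using assms by (intro poly_mapping_eqI) (auto simp: lookup_add lookup_minus lookup_single_if in_keys_iff)
  show "ks (m - sg P 1) \<subseteq> ks m"
    by (auto simp: in_keys_iff lookup_minus)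
  show "mdeg (m - sg P 1) + 1 = mdeg m"
  proof -
    have "mdeg m = mdeg (sg P 1) + mdeg (m - sg P 1)" using arg_cong[OF 1, of mdeg] mdeg_add by metis
    then show ?thesis using mdeg_single[of P] by linarith
  qed
qed

lemma mdeg_1:
  assumes "mdeg m = 1" obtains P where "m = sg P 1"
proof -
  have "m \<noteq> 0" using assms by auto
  then obtain P where P: "P \<in> ks m" by (metis keys_eq_empty ex_in_conv)
  have "mdeg (m - sg P 1) = 0" using mon_decomp(3)[OF P] assms by simp
  then have "m - sg P 1 = 0" by (simp add: mdeg_eq_0)
  then have "m = sg P 1" using mon_decomp(1)[OF P] by simp
  then show ?thesis using that by blast
qed

lemma poly_in_iff: "poly_in X p \<longleftrightarrow> (\<forall>m\<in>ks p. ks m \<subseteq> X)"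
  unfolding poly_in_def by simp

lemma poly_in_add: "poly_in X p \<Longrightarrow> poly_in X q \<Longrightarrow> poly_in X (p + q)"
  unfolding poly_in_def using keys_add[of p q] by blast

lemma poly_in_uminus: "poly_in X p \<Longrightarrow> poly_in X (- p)"
  unfolding poly_in_def by simp

lemma poly_in_diff: "poly_in X p \<Longrightarrow> poly_in X q \<Longrightarrow> poly_in X (p - q)"
  unfolding poly_in_def using keys_diff[of p q] by blast

lemma poly_in_mult: "poly_in X p \<Longrightarrow> poly_in X q \<Longrightarrow> poly_in X (p * q)"
  unfolding poly_in_def
proof
  fix m assume p: "\<forall>m\<in>ks p. ks m \<subseteq> X" and q: "\<forall>m\<in>ks q. ks m \<subseteq> X" and m: "m \<in> ks (p * q)"
  then obtain a b where "m = a + b" "a \<in> ks p" "b \<in> ks q" using keys_mult[of p q] by blast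
  then show "ks m \<subseteq> X" using p q keys_add[of a b] by blast
qed

lemma poly_in_single: "ks m \<subseteq> X \<Longrightarrow> poly_in X (sg m c)"
  unfolding poly_in_def by simp

lemma poly_in_zero [simp]: "poly_in X 0" unfolding poly_in_def by simp
lemma poly_in_one [simp]: "poly_in X 1" unfolding poly_in_def by simp

lemma poly_in_sum: "(\<And>i. i \<in> I \<Longrightarrow> poly_in X (f i)) \<Longrightarrow> poly_in X (\<Sum>i\<in>I. f i)"
  by (induction I rule: infinite_finite_induct) (auto intro: poly_in_add)

lemma gen_ideal_zero: "0 \<in> gen_ideal X G"
  unfolding gen_ideal_def by (intro CollectI exI[of _ "\<lambda>_. 0"]) simp

lemma gen_ideal_add: fixes p :: "('x, 'k::comm_ring_1) mpoly" shows "p \<in> gen_ideal X G \<Longrightarrow> q \<in> gen_ideal X G \<Longrightarrow> p + q \<in> gen_ideal X G"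
  unfolding gen_ideal_def
proof (clarify)
  fix c c' :: "('x, 'k) mpoly \<Rightarrow> ('x, 'k) mpoly" assume c: "\<forall>g\<in>G. poly_in X (c g)" and c': "\<forall>g\<in>G. poly_in X (c' g)"
  show "\<exists>d. (\<forall>g\<in>G. poly_in X (d g)) \<and> (\<Sum>g\<in>G. c g * g) + (\<Sum>g\<in>G. c' g * g) = (\<Sum>g\<in>G. d g * g)"
    using c c' by (intro exI[of _ "\<lambda>g. c g + c' g"]) (simp add: poly_in_add distrib_right sum.distrib)
qed

lemma gen_ideal_mult: fixes p :: "('x, 'k::comm_ring_1) mpoly" shows "poly_in X r \<Longrightarrow> p \<in> gen_ideal X G \<Longrightarrow> r * p \<in> gen_ideal X G"
  unfolding gen_ideal_def
proof (clarify)
  fix c :: "('x, 'k) mpoly \<Rightarrow> ('x, 'k) mpoly" assume r: "poly_in X r" and c: "\<forall>g\<in>G. poly_in X (c g)"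
  show "\<exists>d. (\<forall>g\<in>G. poly_in X (d g)) \<and> r * (\<Sum>g\<in>G. c g * g) = (\<Sum>g\<in>G. d g * g)"
    using c r by (intro exI[of _ "\<lambda>g. r * c g"]) (simp add: poly_in_mult sum_distrib_left mult.assoc)
qed

lemma gen_ideal_base:
  fixes g :: "('x, 'k::comm_ring_1) mpoly"
  assumes "g \<in> G" "finite G" shows "g \<in> gen_ideal X G"
proof -
  have "(\<Sum>h\<in>G. (if h = g then 1 else 0) * h) = (\<Sum>h\<in>G. (if h = g then h else 0))"
    by (rule sum.cong) auto
  also have "\<dots> = g" using assms by simp
  finally show ?thesis unfolding gen_ideal_def
    by (intro CollectI exI[of _ "\<lambda>h. if h = g then 1 else 0"]) simp
qed

lemma gen_ideal_uminus: "p \<in> gen_ideal X G \<Longrightarrow> - p \<in> gen_ideal X G"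
  using gen_ideal_mult[of X "-1" p G] by (simp add: poly_in_uminus)

lemma gen_ideal_diff: "p \<in> gen_ideal X G \<Longrightarrow> q \<in> gen_ideal X G \<Longrightarrow> p - q \<in> gen_ideal X G"
  using gen_ideal_add[of p X G "-q"] gen_ideal_uminus by fastforce

lemma gen_ideal_sum: "(\<And>i. i \<in> I \<Longrightarrow> f i \<in> gen_ideal X G) \<Longrightarrow> (\<Sum>i\<in>I. f i) \<in> gen_ideal X G"
  by (induction I rule: infinite_finite_induct) (auto intro: gen_ideal_add gen_ideal_zero)

lemma gen_ideal_poly_in: "p \<in> gen_ideal X G \<Longrightarrow> (\<forall>g\<in>G. poly_in X g) \<Longrightarrow> poly_in X p"
  unfolding gen_ideal_def by (auto intro!: poly_in_sum poly_in_mult)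


lemma lookup_Psi: "lk (Psi f p) mu = (\<Sum>m\<in>ks p. if f m = mu then lk p m else 0)"
  unfolding Psi_def by (simp add: lookup_sum lookup_single_if)

lemma lookup_phi: "lk (phi E m) y = (\<Sum>x\<in>ks m. lk m x * lk (psi E x) y)"
  unfolding phi_def by (simp add: lookup_sum lookup_rep)

lemma lookup_psi:
  assumes "finite E"
  shows "lk (psi E P) (e, b) = (if e \<in> E \<and> (e \<in> cut E P) = b then 1 else 0)"
proof -
  have C: "cut E P \<subseteq> E" by (rule cut_subset)
  have fin: "finite (cut E P)" "finite (E - cut E P)" using C assms finite_subset by auto
  show ?thesis
  proof (cases b)
    case True
    then show ?thesis unfolding psi_def using C fin
      by (auto simp: lookup_add lookup_sum lookup_single_if)
  next
    case False
    then show ?thesis unfolding psi_def using C fin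
      by (auto simp: lookup_add lookup_sum lookup_single_if)
  qed
qed

locale TS =
  fixes V :: "'v set" and E :: "'v set set" and ty :: "'k::field itself"
  assumes tree: "is_tree V E" and Ene: "E \<noteq> {}"
begin

abbreviation X where "X \<equiv> unordered_partitions V"

definition pi where "pi S = inv_into X (cut E) S"

lemma sgraph: "simple_graph V E" using tree unfolding is_tree_def by blast
lemma finE: "finite E" using tree_finite_E[OF sgraph] .
lemma bij: "bij_betw (cut E) X (Pow E)" using cut_bij[OF tree] .
lemma finX: "finite X" using bij_betw_finite[OF bij] finE by simp

lemma pi_in: "S \<subseteq> E \<Longrightarrow> pi S \<in> X"
  unfolding pi_def using bij by (metis PowI bij_betw_def inv_into_into)
lemma cut_pi: "S \<subseteq> E \<Longrightarrow> cut E (pi S) = S"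
  unfolding pi_def using bij by (meson PowI bij_betw_inv_into_right)
lemma pi_cut: "P \<in> X \<Longrightarrow> pi (cut E P) = P"
  unfolding pi_def using bij by (simp add: bij_betw_def)

lemma lk_psi: "lk (psi E P) (e, b) = (if e \<in> E \<and> (e \<in> cut E P) = b then 1 else 0)"
  using lookup_psi[OF finE] .

lemma deg_phi: assumes "e \<in> E" shows "lk (phi E m) (e, True) + lk (phi E m) (e, False) = mdeg m"
proof -
  have "lk (phi E m) (e, True) + lk (phi E m) (e, False)
      = (\<Sum>x\<in>ks m. lk m x * (lk (psi E x) (e, True) + lk (psi E x) (e, False)))"
    by (simp add: lookup_phi sum.distrib distrib_left)
  also have "\<dots> = (\<Sum>x\<in>ks m. lk m x)" using assms by (intro sum.cong) (auto simp: lk_psi)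
  finally show ?thesis unfolding mdeg_def .
qed

lemma phi_mdeg: "phi E m = phi E m' \<Longrightarrow> mdeg m = mdeg m'"
  using deg_phi Ene by (metis ex_in_conv)

definition Um :: "('v set set \<Rightarrow>\<^sub>0 nat) \<Rightarrow> 'v set set" where "Um m = \<Union>(cut E ` ks m)"

lemma Um_phi: "e \<in> Um m \<longleftrightarrow> e \<in> E \<and> lk (phi E m) (e, True) \<noteq> 0"
proof -
  have 1: "lk (phi E m) (e, True) = (\<Sum>x\<in>ks m. lk m x * (if e \<in> E \<and> e \<in> cut E x then 1 else 0))"
    unfolding lookup_phi lk_psi by simp
  have 2: "(\<Sum>x\<in>ks m. lk m x * (if e \<in> E \<and> e \<in> cut E x then 1 else 0)) \<noteq> 0
      \<longleftrightarrow> (\<exists>x\<in>ks m. e \<in> E \<and> e \<in> cut E x)"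
  proof -
    have "(\<Sum>x\<in>ks m. lk m x * (if e \<in> E \<and> e \<in> cut E x then 1 else 0)) = 0
      \<longleftrightarrow> (\<forall>x\<in>ks m. lk m x * (if e \<in> E \<and> e \<in> cut E x then 1 else 0) = 0)"
      by (rule sum_eq_0_iff) simp
    also have "\<dots> \<longleftrightarrow> (\<forall>x\<in>ks m. \<not> (e \<in> E \<and> e \<in> cut E x))"
      by (intro ball_cong refl) (simp add: in_keys_iff)
    finally show ?thesis by auto
  qed
  have 3: "e \<in> Um m \<longleftrightarrow> (\<exists>x\<in>ks m. e \<in> E \<and> e \<in> cut E x)"
    unfolding Um_def using cut_subset[of E] by blast
  show ?thesis using 1 2 3 by simp
qed

lemma phi_Um: assumes "phi E m = phi E m'" shows "Um m = Um m'"
proof (rule set_eqI)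
  fix e show "e \<in> Um m \<longleftrightarrow> e \<in> Um m'" unfolding Um_phi assms ..
qed


lemma Um_sub: "Um m \<subseteq> E" unfolding Um_def using cut_subset by blast
lemma Um_add: "Um (a + b) = Um a \<union> Um b" unfolding Um_def by (simp add: keys_add_nat)
lemma Um_single: "Um (sg P 1) = cut E P" unfolding Um_def by simp
lemma Um_zero: "Um 0 = {}" unfolding Um_def by simp

lemma psi_inj: assumes "P \<in> X" "Q \<in> X" "psi E P = psi E Q" shows "P = Q"
proof -
  have "cut E P = cut E Q"
  proof (rule set_eqI)
    fix e
    have "lk (psi E P) (e, True) = lk (psi E Q) (e, True)" using assms(3) by simp
    then show "e \<in> cut E P \<longleftrightarrow> e \<in> cut E Q" using cut_subset[of E P] cut_subset[of E Q]
      by (auto simp: lk_psi split: if_splits)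
  qed
  then show ?thesis using bij assms unfolding bij_betw_def inj_on_def by blast
qed

lemma move_phi:
  assumes "S \<subseteq> E" "T \<subseteq> E"
  shows "psi E (pi S) + psi E (pi T) = psi E (pi (S \<union> T)) + psi E (pi (S \<inter> T))"
proof (rule poly_mapping_eqI)
  fix y :: "'v set \<times> bool"
  obtain e b where y: "y = (e, b)" by (cases y)
  have u: "S \<union> T \<subseteq> E" "S \<inter> T \<subseteq> E" using assms by auto
  show "lk (psi E (pi S) + psi E (pi T)) y = lk (psi E (pi (S \<union> T)) + psi E (pi (S \<inter> T))) y"
    unfolding y lookup_add lk_psi cut_pi[OF assms(1)] cut_pi[OF assms(2)] cut_pi[OF u(1)] cut_pi[OF u(2)]
    by (cases b; cases "e \<in> S"; cases "e \<in> T"; simp)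
qed

definition mon2 :: "'v set set \<Rightarrow> 'v set set \<Rightarrow> ('v set set, 'k) mpoly" where
  "mon2 P Q = sg (sg P 1 + sg Q 1) 1"

definition binS :: "'v set set \<Rightarrow> 'v set set \<Rightarrow> ('v set set, 'k) mpoly" where
  "binS S T = mon2 (pi S) (pi T) - mon2 (pi (S \<union> T)) (pi (S \<inter> T))"

definition OI where "OI = {(S, T). S \<subseteq> E \<and> T \<subseteq> E \<and> \<not> S \<subseteq> T \<and> \<not> T \<subseteq> S}"

definition Gset where "Gset = (\<lambda>(S, T). binS S T) ` OI"

definition J where "J = gen_ideal X Gset"

definition sim :: "('v set set \<Rightarrow>\<^sub>0 nat) \<Rightarrow> ('v set set \<Rightarrow>\<^sub>0 nat) \<Rightarrow> bool" where
  "sim m m' \<longleftrightarrow> ty = ty \<and> (sg m 1 - sg m' 1 :: ('v set set, 'k) mpoly) \<in> J"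

lemma finOI: "finite OI"
proof -
  have "OI \<subseteq> Pow E \<times> Pow E" unfolding OI_def by auto
  moreover have "finite (Pow E \<times> Pow E)" using finE by simp
  ultimately show ?thesis by (rule finite_subset)
qed

lemma finG: "finite Gset" unfolding Gset_def using finOI by simp

lemma sim_refl: "sim m m" unfolding sim_def J_def by (simp add: gen_ideal_zero)

lemma sim_sym: assumes "sim m m'" shows "sim m' m"
proof -
  have "- (sg m 1 - sg m' 1 :: ('v set set, 'k) mpoly) \<in> J"
    using assms unfolding sim_def J_def by (intro gen_ideal_uminus) simp
  then show ?thesis unfolding sim_def by simp
qed

lemma sim_trans: assumes "sim a b" "sim b c" shows "sim a c"
proof -
  have "(sg a 1 - sg b 1 :: ('v set set, 'k) mpoly) + (sg b 1 - sg c 1) \<in> J"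
    using assms unfolding sim_def J_def by (intro gen_ideal_add) simp_all
  then show ?thesis unfolding sim_def by simp
qed

lemma sim_add: assumes "ks k \<subseteq> X" "sim m m'" shows "sim (k + m) (k + m')"
proof -
  have "sg (k + m) 1 - sg (k + m') 1 = (sg k 1 :: ('v set set, 'k) mpoly) * (sg m 1 - sg m' 1)"
    by (simp add: right_diff_distrib mult_single)
  moreover have "(sg k 1 :: ('v set set, 'k) mpoly) * (sg m 1 - sg m' 1) \<in> J"
    using gen_ideal_mult[OF poly_in_single[OF assms(1)]] assms(2) unfolding sim_def J_def by simp
  ultimately show ?thesis unfolding sim_def by simp
qed

lemma move_sim:
  assumes P: "P \<in> X" and Q: "Q \<in> X"
  shows "sim (sg P 1 + sg Q 1) (sg (pi (cut E P \<union> cut E Q)) 1 + sg (pi (cut E P \<inter> cut E Q)) 1)"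
proof -
  let ?S = "cut E P" and ?T = "cut E Q"
  have SE: "?S \<subseteq> E" "?T \<subseteq> E" using cut_subset by auto
  show ?thesis
  proof (cases "?S \<subseteq> ?T \<or> ?T \<subseteq> ?S")
    case True
    have "sg (pi (?S \<union> ?T)) (1::nat) + sg (pi (?S \<inter> ?T)) 1 = sg P 1 + sg Q 1"
    proof (cases "?S \<subseteq> ?T")
      case True
      then have "?S \<union> ?T = ?T" "?S \<inter> ?T = ?S" by auto
      then show ?thesis using pi_cut[OF P] pi_cut[OF Q] by (simp add: add.commute)
    next
      case False
      then have "?S \<union> ?T = ?S" "?S \<inter> ?T = ?T" using \<open>?S \<subseteq> ?T \<or> ?T \<subseteq> ?S\<close> by auto
      then show ?thesis using pi_cut[OF P] pi_cut[OF Q] by simp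
    qed
    then show ?thesis using sim_refl by simp
  next
    case False
    then have "(?S, ?T) \<in> OI" unfolding OI_def using SE by auto
    then have "binS ?S ?T \<in> Gset" unfolding Gset_def by (rule image_eqI[rotated]) simp
    then have "binS ?S ?T \<in> J" unfolding J_def using gen_ideal_base finG by blast
    moreover have "binS ?S ?T = sg (sg P 1 + sg Q 1) 1 - sg (sg (pi (?S \<union> ?T)) 1 + sg (pi (?S \<inter> ?T)) 1) 1"
      unfolding binS_def mon2_def pi_cut[OF P] pi_cut[OF Q] ..
    ultimately show ?thesis unfolding sim_def by simp
  qed
qed

lemma lemmaA:
  "ks m \<subseteq> X \<Longrightarrow> m \<noteq> 0 \<Longrightarrow> \<exists>r. ks r \<subseteq> X \<and> sim m (sg (pi (Um m)) 1 + r) \<and> phi E m = phi E (sg (pi (Um m)) 1 + r)"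
proof (induction "mdeg m" arbitrary: m rule: less_induct)
  case less
  obtain P where P: "P \<in> ks m" using less.prems(2) by (metis keys_eq_empty ex_in_conv)
  define m0 where "m0 = m - sg P 1"
  have m: "m = sg P 1 + m0" "ks m0 \<subseteq> ks m" "mdeg m0 + 1 = mdeg m" using mon_decomp[OF P] unfolding m0_def by auto
  have PX: "P \<in> X" using P less.prems(1) by blast
  have m0X: "ks m0 \<subseteq> X" using m(2) less.prems(1) by blast
  show ?case
  proof (cases "m0 = 0")
    case True
    then have "Um m = cut E P" using m(1) Um_single[of P] by simp
    then have "sg (pi (Um m)) 1 + 0 = m" using m(1) True pi_cut[OF PX] by simp
    then show ?thesis using sim_refl by (intro exI[of _ 0]) simp
  next
    case False
    obtain r0 where r0: "ks r0 \<subseteq> X" "sim m0 (sg (pi (Um m0)) 1 + r0)" "phi E m0 = phi E (sg (pi (Um m0)) 1 + r0)"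
      using less.hyps[of m0] m(3) m0X False by auto
    define U0 where "U0 = Um m0"
    define Q where "Q = pi U0"
    have U0E: "U0 \<subseteq> E" unfolding U0_def by (rule Um_sub)
    have QX: "Q \<in> X" unfolding Q_def using pi_in[OF U0E] .
    have cQ: "cut E Q = U0" unfolding Q_def using cut_pi[OF U0E] .
    define W where "W = pi (cut E P \<union> U0)"
    define Z where "Z = pi (cut E P \<inter> U0)"
    have ZX: "Z \<in> X" unfolding Z_def using U0E cut_subset[of E P] by (intro pi_in) auto
    have Umm: "Um m = cut E P \<union> U0" unfolding U0_def m(1) Um_add Um_single ..
    have s1: "sim m (sg P 1 + (sg Q 1 + r0))"
      using sim_add[of "sg P 1" m0 "sg Q 1 + r0"] PX r0(2) m(1) unfolding Q_def U0_def by simp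
    have s2: "sim (sg P 1 + sg Q 1) (sg W 1 + sg Z 1)"
      using move_sim[OF PX QX] unfolding cQ W_def Z_def .
    have s3: "sim (r0 + (sg P 1 + sg Q 1)) (r0 + (sg W 1 + sg Z 1))"
      using sim_add[OF r0(1) s2] .
    have s: "sim m (sg W 1 + (sg Z 1 + r0))"
      using sim_trans[OF s1, of "sg W 1 + (sg Z 1 + r0)"] s3 by (simp add: ac_simps)
    have ph: "phi E m = phi E (sg W 1 + (sg Z 1 + r0))"
    proof -
      have "phi E m = psi E P + (psi E Q + phi E r0)"
        using r0(3) unfolding m(1) phi_add Q_def U0_def by simp
      also have "psi E P = psi E (pi (cut E P))" using pi_cut[OF PX] by simp
      also have "psi E Q = psi E (pi U0)" unfolding Q_def ..
      also have "psi E (pi (cut E P)) + (psi E (pi U0) + phi E r0) = (psi E (pi (cut E P)) + psi E (pi U0)) + phi E r0"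
        by (simp add: add.assoc)
      also have "psi E (pi (cut E P)) + psi E (pi U0) = psi E W + psi E Z"
        unfolding W_def Z_def using move_phi[OF cut_subset U0E] .
      finally show ?thesis by (simp add: phi_add add.assoc)
    qed
    show ?thesis
      using s ph ZX r0(1) unfolding Umm W_def[symmetric]
      by (intro exI[of _ "sg Z 1 + r0"]) (auto simp: keys_add_nat)
  qed
qed

lemma lemmaB:
  "ks m \<subseteq> X \<Longrightarrow> ks m' \<subseteq> X \<Longrightarrow> phi E m = phi E m' \<Longrightarrow> sim m m'"
proof (induction "mdeg m" arbitrary: m m' rule: less_induct)
  case less
  show ?case
  proof (cases "m = 0")
    case True
    then have "mdeg m' = 0" using phi_mdeg[OF less.prems(3)] by simp
    then have "m' = 0" by (simp add: mdeg_eq_0)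
    then show ?thesis using True sim_refl by simp
  next
    case False
    then have "mdeg m \<noteq> 0" by (simp add: mdeg_eq_0)
    then have "mdeg m' \<noteq> 0" using phi_mdeg[OF less.prems(3)] by simp
    then have m'0: "m' \<noteq> 0" by auto
    have U: "Um m' = Um m" using phi_Um[OF less.prems(3)] by simp
    obtain r where r: "ks r \<subseteq> X" "sim m (sg (pi (Um m)) 1 + r)" "phi E m = phi E (sg (pi (Um m)) 1 + r)"
      using lemmaA[OF less.prems(1) False] by blast
    obtain r' where r': "ks r' \<subseteq> X" "sim m' (sg (pi (Um m)) 1 + r')" "phi E m' = phi E (sg (pi (Um m)) 1 + r')"
      using lemmaA[OF less.prems(2) m'0] U by auto
    have "phi E r = phi E r'" using r(3) r'(3) less.prems(3) by (simp add: phi_add)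
    moreover have "mdeg r < mdeg m" using phi_mdeg[OF r(3)] by (simp add: mdeg_add)
    ultimately have "sim r r'" using less.hyps r(1) r'(1) by blast
    moreover have "ks (sg (pi (Um m)) 1) \<subseteq> X" using pi_in[OF Um_sub] by simp
    ultimately have "sim (sg (pi (Um m)) 1 + r) (sg (pi (Um m)) 1 + r')" using sim_add by blast
    then show ?thesis using r(2) r'(2) sim_trans sim_sym by blast
  qed
qed

end


lemma lk_single1: "lk (sg a (1::nat)) x = (if a = x then 1 else 0)"
  by (rule lookup_single_if)

lemma single1_inj: assumes "sg a (1::nat) = sg b 1" shows "a = b"
proof (rule ccontr)
  assume "a \<noteq> b"
  have "lk (sg a (1::nat)) a = 1" by (simp add: lk_single1)
  moreover have "lk (sg b (1::nat)) a = 0" using \<open>a \<noteq> b\<close> by (simp only: lk_single1) simp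
  moreover have "lk (sg a (1::nat)) a = lk (sg b 1) a" using assms by (rule arg_cong)
  ultimately show False by linarith
qed

lemma pair_eq:
  assumes eq: "sg a 1 + sg b 1 = sg c 1 + sg d (1::nat)"
  shows "(a = c \<and> b = d) \<or> (a = d \<and> b = c)"
proof -
  have "a = c \<or> a = d"
  proof (rule ccontr)
    assume "\<not> (a = c \<or> a = d)"
    then have "c \<noteq> a" "d \<noteq> a" by auto
    then have "lk (sg c 1 + sg d (1::nat)) a = 0" by (simp only: lookup_add lk_single1) simp
    moreover have "lk (sg a 1 + sg b (1::nat)) a \<noteq> 0" by (simp only: lookup_add lk_single1) simp
    moreover have "lk (sg a 1 + sg b (1::nat)) a = lk (sg c 1 + sg d 1) a" using eq by (rule arg_cong)
    ultimately show False by linarith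
  qed
  then show ?thesis
  proof
    assume ac: "a = c"
    have "sg a 1 + sg b 1 = sg a 1 + sg d (1::nat)" using eq unfolding ac .
    then have "b = d" by (rule single1_inj[OF add_left_imp_eq])
    then show ?thesis using ac by simp
  next
    assume ad: "a = d"
    have "sg a 1 + sg b 1 = sg a 1 + sg c (1::nat)" using eq unfolding ad by (simp only: add.commute)
    then have "b = c" by (rule single1_inj[OF add_left_imp_eq])
    then show ?thesis using ad by simp
  qed
qed

lemma mdeg_pair: "mdeg (sg a 1 + sg b 1) = 2"
  by (simp add: mdeg_add)

context TS
begin

definition lm1 where "lm1 S T = sg (pi S) 1 + sg (pi T) (1::nat)"
definition lm2 where "lm2 S T = sg (pi (S \<union> T)) 1 + sg (pi (S \<inter> T)) (1::nat)"

lemma binS_lm: "binS S T = sg (lm1 S T) 1 - sg (lm2 S T) 1"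
  unfolding binS_def mon2_def lm1_def lm2_def ..

lemma lm1_ne_lm2:
  assumes "(S, T) \<in> OI" shows "lm1 S T \<noteq> lm2 S T"
proof
  assume "lm1 S T = lm2 S T"
  then have "(pi S = pi (S \<union> T) \<and> pi T = pi (S \<inter> T)) \<or> (pi S = pi (S \<inter> T) \<and> pi T = pi (S \<union> T))"
    unfolding lm1_def lm2_def by (rule pair_eq)
  moreover have E: "S \<subseteq> E" "T \<subseteq> E" "S \<union> T \<subseteq> E" "S \<inter> T \<subseteq> E" using assms unfolding OI_def by auto
  ultimately have "(S = S \<union> T) \<or> (S = S \<inter> T)" using cut_pi by metis
  then show False using assms unfolding OI_def by auto
qed

lemma lmX: "(S, T) \<in> OI \<Longrightarrow> ks (lm1 S T) \<subseteq> X \<and> ks (lm2 S T) \<subseteq> X"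
  unfolding lm1_def lm2_def OI_def by (auto simp: keys_add_nat intro!: pi_in)

lemma G_props:
  assumes "g \<in> Gset"
  shows "poly_in X g" "Psi (phi E) g = 0" "quadric g"
proof -
  obtain S T where ST: "(S, T) \<in> OI" "g = binS S T" using assms unfolding Gset_def by auto
  have E: "S \<subseteq> E" "T \<subseteq> E" using ST unfolding OI_def by auto
  show "poly_in X g" unfolding ST binS_lm using lmX[OF ST(1)]
    by (intro poly_in_diff poly_in_single) auto
  have "phi E (lm1 S T) = phi E (lm2 S T)"
    unfolding lm1_def lm2_def phi_add phi_single using move_phi[OF E] .
  then show "Psi (phi E) g = 0" unfolding ST binS_lm Psi_diff by simp
  have ne: "lm1 S T \<noteq> lm2 S T" using lm1_ne_lm2[OF ST(1)] .
  have "lk g (lm1 S T) = 1" unfolding ST binS_lm using ne by (simp add: lookup_minus lookup_single_if)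
  then have "g \<noteq> 0" by auto
  moreover have "\<forall>m\<in>ks g. mdeg m = 2"
  proof
    fix m assume "m \<in> ks g"
    then have "m = lm1 S T \<or> m = lm2 S T" unfolding ST binS_lm using keys_diff by fastforce
    then show "mdeg m = 2" unfolding lm1_def lm2_def using mdeg_pair by auto
  qed
  ultimately show "quadric g" unfolding quadric_def by blast
qed

lemma cut_ideal_eq: "cut_ideal V E = {p. poly_in X p \<and> Psi (phi E) p = 0}"
  unfolding cut_ideal_def peval_Psi ..

lemma J_sub: "p \<in> J \<Longrightarrow> poly_in X p \<and> Psi (phi E) p = 0"
proof -
  assume "p \<in> J"
  then obtain c where c: "\<forall>g\<in>Gset. poly_in X (c g)" "p = (\<Sum>g\<in>Gset. c g * g)"
    unfolding J_def gen_ideal_def by blast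
  have "poly_in X p" using \<open>p \<in> J\<close> G_props(1) unfolding J_def by (intro gen_ideal_poly_in) auto
  moreover have "Psi (phi E) p = 0"
    unfolding c(2) Psi_sum using G_props(2) by (simp add: Psi_mult[where f="phi E", OF phi_add])
  ultimately show ?thesis by blast
qed

lemma sub_J:
  fixes p :: "('v set set, 'k) mpoly"
  assumes pX: "poly_in X p" and p0: "Psi (phi E) p = 0"
  shows "p \<in> J"
proof -
  define K where "K = ks p"
  define rp where "rp m = (SOME m'. m' \<in> K \<and> phi E m' = phi E m)" for m
  have rp: "rp m \<in> K \<and> phi E (rp m) = phi E m" if "m \<in> K" for m
    unfolding rp_def by (rule someI[of _ m]) (use that in simp)
  have rp_eq: "rp m = rp m'" if "phi E m = phi E m'" for m m'
    unfolding rp_def using that by simp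
  have KX: "ks m \<subseteq> X" if "m \<in> K" for m using pX that unfolding K_def poly_in_def by blast
  have decomp: "p = (\<Sum>m\<in>K. sg 0 (lk p m) * (sg m 1 - sg (rp m) 1)) + (\<Sum>m\<in>K. sg (rp m) (lk p m))"
  proof -
    have "(\<Sum>m\<in>K. sg 0 (lk p m) * (sg m 1 - sg (rp m) 1)) + (\<Sum>m\<in>K. sg (rp m) (lk p m))
        = (\<Sum>m\<in>K. (sg m (lk p m) - sg (rp m) (lk p m)) + sg (rp m) (lk p m))"
      unfolding sum.distrib[symmetric] by (simp add: right_diff_distrib mult_single)
    also have "\<dots> = (\<Sum>m\<in>K. sg m (lk p m))" by simp
    also have "\<dots> = p" unfolding K_def by (rule poly_expand[symmetric])
    finally show ?thesis by (rule sym)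
  qed
  have second: "(\<Sum>m\<in>K. sg (rp m) (lk p m)) = (0 :: ('v set set, 'k) mpoly)"
  proof (rule poly_mapping_eqI)
    fix mu
    have l: "lk (\<Sum>m\<in>K. sg (rp m) (lk p m)) mu = (\<Sum>m\<in>K. if rp m = mu then lk p m else 0)"
      by (simp add: lookup_sum lookup_single_if)
    show "lk (\<Sum>m\<in>K. sg (rp m) (lk p m)) mu = lk 0 mu"
    proof (cases "\<exists>m0\<in>K. rp m0 = mu")
      case False
      have "(\<Sum>m\<in>K. if rp m = mu then lk p m else 0) = 0" using False by (intro sum.neutral) auto
      then show ?thesis unfolding l by simp
    next
      case True
      then obtain m0 where m0: "m0 \<in> K" "rp m0 = mu" by blast
      have "(\<Sum>m\<in>K. if rp m = mu then lk p m else 0) = (\<Sum>m\<in>K. if phi E m = phi E m0 then lk p m else 0)"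
      proof (rule sum.cong[OF refl])
        fix m assume m: "m \<in> K"
        have "rp m = mu \<longleftrightarrow> phi E m = phi E m0"
        proof
          assume "rp m = mu"
          have "phi E m = phi E (rp m)" using rp[OF m] by simp
          also have "\<dots> = phi E (rp m0)" using \<open>rp m = mu\<close> m0(2) by simp
          also have "\<dots> = phi E m0" using rp[OF m0(1)] by simp
          finally show "phi E m = phi E m0" .
        next
          assume "phi E m = phi E m0" then show "rp m = mu" using rp_eq[of m m0] m0(2) by simp
        qed
        then show "(if rp m = mu then lk p m else 0) = (if phi E m = phi E m0 then lk p m else 0)" by simp
      qed
      also have "\<dots> = lk (Psi (phi E) p) (phi E m0)" unfolding lookup_Psi K_def ..
      finally show ?thesis unfolding l p0 by simp
    qed
  qed
  have first: "(\<Sum>m\<in>K. sg 0 (lk p m) * (sg m 1 - sg (rp m) 1)) \<in> J"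
  proof (unfold J_def, rule gen_ideal_sum)
    fix m assume m: "m \<in> K"
    have "sim m (rp m)" using lemmaB[OF KX[OF m] KX[OF conjunct1[OF rp[OF m]]]] rp[OF m] by simp
    then have "(sg m 1 - sg (rp m) 1 :: ('v set set, 'k) mpoly) \<in> gen_ideal X Gset" unfolding sim_def J_def by simp
    then show "sg 0 (lk p m) * (sg m 1 - sg (rp m) 1) \<in> gen_ideal X Gset"
      by (rule gen_ideal_mult[rotated]) (simp add: poly_in_single)
  qed
  have p_eq: "p = (\<Sum>m\<in>K. sg 0 (lk p m) * (sg m 1 - sg (rp m) 1))"
    using decomp[unfolded second add_0_right] .
  show ?thesis by (subst p_eq) (rule first)
qed

lemma J_eq: "J = cut_ideal V E"
proof (rule set_eqI)
  fix p show "p \<in> J \<longleftrightarrow> p \<in> cut_ideal V E"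
    unfolding cut_ideal_eq using J_sub[of p] sub_J[of p] by blast
qed

end


lemma vs: "vector_space (\<lambda>(c::'k::field) (p::('x, 'k) mpoly). sg 0 c * p)"
  by unfold_locales (simp_all add: distrib_left distrib_right single_add mult.assoc[symmetric] mult_single)

lemma lk_scale: "lk (sg 0 c * p) m = c * lk p m"
  by (simp add: mult_map_scale_conv_mult[symmetric] map.rep_eq when_def)

definition proj2 :: "('x, 'k::comm_ring_1) mpoly \<Rightarrow> ('x, 'k) mpoly" where
  "proj2 p = Abs_poly_mapping (\<lambda>m. if mdeg m = 2 then lk p m else 0)"

lemma lk_proj2: "lk (proj2 p) m = (if mdeg m = 2 then lk p m else 0)"
proof -
  have "finite {m. (if mdeg m = 2 then lk p m else 0) \<noteq> 0}"
    by (rule finite_subset[of _ "ks p"]) (auto simp: in_keys_iff)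
  then show ?thesis unfolding proj2_def by simp
qed

lemma proj2_add: "proj2 (p + q) = proj2 p + proj2 q"
  by (rule poly_mapping_eqI) (simp add: lk_proj2 lookup_add)

lemma proj2_zero: "proj2 0 = 0"
  by (rule poly_mapping_eqI) (simp add: lk_proj2)

lemma proj2_sum: "proj2 (\<Sum>i\<in>I. f i) = (\<Sum>i\<in>I. proj2 (f i))"
  by (induction I rule: infinite_finite_induct) (simp_all add: proj2_add proj2_zero)

context TS
begin

lemma small_unique:
  assumes "ks m \<subseteq> X" "ks m' \<subseteq> X" "phi E m' = phi E m" "mdeg m \<le> 1"
  shows "m' = m"
proof -
  have d: "mdeg m' = mdeg m" using phi_mdeg[OF assms(3)] .
  show ?thesis
  proof (cases "mdeg m = 0")
    case True then show ?thesis using d by (simp add: mdeg_eq_0)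
  next
    case False
    then have "mdeg m = 1" using assms(4) by simp
    then obtain P where P: "m = sg P 1" by (rule mdeg_1)
    obtain Q where Q: "m' = sg Q 1" using \<open>mdeg m = 1\<close> d mdeg_1 by metis
    have "P \<in> X" "Q \<in> X" using assms(1,2) P Q by auto
    moreover have "psi E Q = psi E P" using assms(3) P Q by simp
    ultimately have "Q = P" using psi_inj by blast
    then show ?thesis using P Q by simp
  qed
qed

lemma small_zero:
  assumes g: "g \<in> cut_ideal V E" and m: "mdeg m \<le> 1"
  shows "lk g m = 0"
proof (cases "m \<in> ks g")
  case False then show ?thesis by (simp add: in_keys_iff)
next
  case True
  have gX: "poly_in X g" and g0: "Psi (phi E) g = 0" using g unfolding cut_ideal_eq by auto
  have mX: "ks m \<subseteq> X" using gX True unfolding poly_in_def by blast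
  have "lk (Psi (phi E) g) (phi E m) = (\<Sum>m'\<in>ks g. if phi E m' = phi E m then lk g m' else 0)"
    by (rule lookup_Psi)
  also have "\<dots> = (\<Sum>m'\<in>ks g. if m' = m then lk g m' else 0)"
  proof (rule sum.cong[OF refl])
    fix m' assume "m' \<in> ks g"
    then have "ks m' \<subseteq> X" using gX unfolding poly_in_def by blast
    then have "phi E m' = phi E m \<longleftrightarrow> m' = m" using small_unique[OF mX _ _ m] by auto
    then show "(if phi E m' = phi E m then lk g m' else 0) = (if m' = m then lk g m' else 0)" by simp
  qed
  also have "\<dots> = lk g m" using True by simp
  finally show ?thesis using g0 by simp
qed

lemma proj2_mult:
  assumes g: "g \<in> cut_ideal V E"
  shows "proj2 (c * g) = sg 0 (lk c 0) * proj2 (g :: ('v set set, 'k) mpoly)"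
proof (rule poly_mapping_eqI)
  fix m
  show "lk (proj2 (c * g)) m = lk (sg 0 (lk c 0) * proj2 g) m"
  proof (cases "mdeg m = 2")
    case False then show ?thesis by (simp add: lk_proj2 lk_scale)
  next
    case True
    have "lk (c * g) m = (\<Sum>a\<in>ks c. \<Sum>b\<in>ks g. if a + b = m then lk c a * lk g b else 0)"
      by (rule lookup_mult_expand)
    also have "\<dots> = (\<Sum>a\<in>ks c. \<Sum>b\<in>ks g. if a = 0 then (if b = m then lk c a * lk g b else 0) else 0)"
    proof (intro sum.cong refl)
      fix a b assume b: "b \<in> ks g"
      have "a + b = m \<longleftrightarrow> a = 0 \<and> b = m"
      proof
        assume ab: "a + b = m"
        have "lk g b \<noteq> 0" using b by (simp add: in_keys_iff)
        then have "\<not> mdeg b \<le> 1" using small_zero[OF g] by blast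
        moreover have "mdeg a + mdeg b = 2" using ab True by (simp add: mdeg_add[symmetric])
        ultimately have "mdeg a = 0" by linarith
        then have "a = 0" by (simp add: mdeg_eq_0)
        then show "a = 0 \<and> b = m" using ab by simp
      qed simp
      then show "(if a + b = m then lk c a * lk g b else 0) = (if a = 0 then (if b = m then lk c a * lk g b else 0) else 0)"
        by auto
    qed
    also have "\<dots> = (\<Sum>a\<in>ks c. if a = 0 then lk c a * lk g m else 0)"
    proof (rule sum.cong[OF refl])
      fix a
      have "(\<Sum>b\<in>ks g. if b = m then lk c a * lk g b else 0) = lk c a * lk g m"
        by (simp add: sum.delta in_keys_iff)
      then show "(\<Sum>b\<in>ks g. if a = 0 then (if b = m then lk c a * lk g b else 0) else 0) = (if a = 0 then lk c a * lk g m else 0)"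
        by simp
    qed
    also have "\<dots> = lk c 0 * lk g m" by (simp add: sum.delta in_keys_iff)
    finally show ?thesis using True by (simp add: lk_proj2 lk_scale)
  qed
qed

lemma proj2_G: "h \<in> Gset \<Longrightarrow> proj2 h = h"
proof (rule poly_mapping_eqI)
  fix m assume h: "h \<in> Gset"
  have "\<forall>m\<in>ks h. mdeg m = 2" using G_props(3)[OF h] unfolding quadric_def by blast
  then show "lk (proj2 h) m = lk h m" by (auto simp: lk_proj2 in_keys_iff)
qed

lemma binS_sym: "binS T S = binS S T"
  unfolding binS_lm lm1_def lm2_def by (simp add: add.commute Un_commute Int_commute)

lemma lm2_ne_lm1:
  assumes "(S, T) \<in> OI" "(S', T') \<in> OI" shows "lm2 S' T' \<noteq> lm1 S T"
proof
  assume "lm2 S' T' = lm1 S T"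
  then have "(pi (S' \<union> T') = pi S \<and> pi (S' \<inter> T') = pi T) \<or> (pi (S' \<union> T') = pi T \<and> pi (S' \<inter> T') = pi S)"
    unfolding lm1_def lm2_def by (rule pair_eq)
  moreover have "S \<subseteq> E" "T \<subseteq> E" "S' \<union> T' \<subseteq> E" "S' \<inter> T' \<subseteq> E" using assms unfolding OI_def by auto
  ultimately have "(S' \<union> T' = S \<and> S' \<inter> T' = T) \<or> (S' \<union> T' = T \<and> S' \<inter> T' = S)"
    using cut_pi by metis
  then show False using assms(1) unfolding OI_def by auto
qed

lemma lm1_eq:
  assumes "(S, T) \<in> OI" "(S', T') \<in> OI" "lm1 S' T' = lm1 S T"
  shows "(S' = S \<and> T' = T) \<or> (S' = T \<and> T' = S)"
proof -
  have "(pi S' = pi S \<and> pi T' = pi T) \<or> (pi S' = pi T \<and> pi T' = pi S)"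
    using assms(3) unfolding lm1_def by (rule pair_eq)
  moreover have "S \<subseteq> E" "T \<subseteq> E" "S' \<subseteq> E" "T' \<subseteq> E" using assms unfolding OI_def by auto
  ultimately show ?thesis using cut_pi by metis
qed

lemma lk_binS_lm1:
  assumes "(S, T) \<in> OI" "(S', T') \<in> OI"
  shows "lk (binS S' T') (lm1 S T) = (if lm1 S' T' = lm1 S T then 1 else 0)"
  unfolding binS_lm using lm2_ne_lm1[OF assms] by (simp add: lookup_minus lookup_single_if)

lemma binS_eq_iff:
  assumes "(S, T) \<in> OI" "(S', T') \<in> OI"
  shows "binS S' T' = binS S T \<longleftrightarrow> (S' = S \<and> T' = T) \<or> (S' = T \<and> T' = S)"
proof
  assume eq: "binS S' T' = binS S T"
  have "lk (binS S T) (lm1 S T) = 1" using lk_binS_lm1[OF assms(1) assms(1)] by simp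
  then have "lk (binS S' T') (lm1 S T) = 1" using eq by simp
  then have "lm1 S' T' = lm1 S T" using lk_binS_lm1[OF assms] by (auto split: if_splits)
  then show "(S' = S \<and> T' = T) \<or> (S' = T \<and> T' = S)" using lm1_eq[OF assms] by blast
next
  assume "(S' = S \<and> T' = T) \<or> (S' = T \<and> T' = S)"
  then show "binS S' T' = binS S T" using binS_sym by auto
qed

lemma lk_G_lm1:
  assumes ST: "(S, T) \<in> OI" and y: "y \<in> Gset"
  shows "lk y (lm1 S T) = (if y = binS S T then 1 else 0)"
proof -
  obtain S' T' where y': "(S', T') \<in> OI" "y = binS S' T'" using y unfolding Gset_def by auto
  have "lm1 S' T' = lm1 S T \<longleftrightarrow> binS S' T' = binS S T"
  proof
    assume "lm1 S' T' = lm1 S T"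
    then have "(S' = S \<and> T' = T) \<or> (S' = T \<and> T' = S)" using lm1_eq[OF ST y'(1)] by blast
    then show "binS S' T' = binS S T" using binS_eq_iff[OF ST y'(1)] by blast
  next
    assume "binS S' T' = binS S T"
    then have "(S' = S \<and> T' = T) \<or> (S' = T \<and> T' = S)" using binS_eq_iff[OF ST y'(1)] by blast
    then show "lm1 S' T' = lm1 S T" unfolding lm1_def by (auto simp: add.commute)
  qed
  then show ?thesis unfolding y'(2) lk_binS_lm1[OF ST y'(1)] by simp
qed

lemma lower_bound:
  fixes G' :: "('v set set, 'k) mpoly set"
  assumes fin: "finite G'" and GX: "\<forall>g\<in>G'. poly_in X g" and gen: "gen_ideal X G' = cut_ideal V E"
  shows "card Gset \<le> card G'"
proof -
  interpret VS: vector_space "\<lambda>(c::'k) (p::('v set set, 'k) mpoly). sg 0 c * p" by (rule vs)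
  have G'I: "g \<in> cut_ideal V E" if "g \<in> G'" for g
    using gen_ideal_base[OF that fin, of X] gen by simp
  have sp: "Gset \<subseteq> VS.span (proj2 ` G')"
  proof
    fix h assume h: "h \<in> Gset"
    have "h \<in> J" unfolding J_def using gen_ideal_base[OF h finG] .
    then have "h \<in> gen_ideal X G'" using J_eq gen by simp
    then obtain c where c: "h = (\<Sum>g\<in>G'. c g * g)" unfolding gen_ideal_def by blast
    have "h = proj2 h" using proj2_G[OF h] by simp
    also have "\<dots> = (\<Sum>g\<in>G'. sg 0 (lk (c g) 0) * proj2 g)"
      unfolding c proj2_sum using proj2_mult[OF G'I] by simp
    also have "\<dots> \<in> VS.span (proj2 ` G')"
      by (intro VS.span_sum VS.span_scale VS.span_base) simp
    finally show "h \<in> VS.span (proj2 ` G')" .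
  qed
  have ind: "VS.independent Gset"
  proof (rule VS.independent_if_scalars_zero[OF finG])
    fix f x assume s: "(\<Sum>x\<in>Gset. sg 0 (f x) * x) = 0" and x: "x \<in> Gset"
    obtain S T where ST: "(S, T) \<in> OI" "x = binS S T" using x unfolding Gset_def by auto
    have "0 = lk (\<Sum>y\<in>Gset. sg 0 (f y) * y) (lm1 S T)" using s by simp
    also have "\<dots> = (\<Sum>y\<in>Gset. f y * (if y = x then 1 else 0))"
      unfolding lookup_sum lk_scale using lk_G_lm1[OF ST(1)] ST(2) by simp
    also have "\<dots> = f x" using x finG by (simp add: if_distrib cong: if_cong)
    finally show "f x = 0" by simp
  qed
  have "card Gset \<le> card (proj2 ` G')"
    using VS.independent_span_bound[OF finite_imageI[OF fin] ind sp] by simp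
  also have "\<dots> \<le> card G'" using fin by (rule card_image_le)
  finally show ?thesis .
qed

end


lemma card_chain:
  assumes fin: "finite E"
  shows "card {(S, T). S \<subseteq> T \<and> T \<subseteq> E} = 3 ^ card E"
proof -
  define A where "A = {(S, T). S \<subseteq> T \<and> T \<subseteq> E}"
  define B where "B = PiE E (\<lambda>_. {0::nat, 1, 2})"
  define f where "f = (\<lambda>(S, T). restrict (\<lambda>e. (if e \<in> S then 1 else 0) + (if e \<in> T then 1 else (0::nat))) E)"
  define g where "g = (\<lambda>\<phi>. ({e \<in> E. \<phi> e = (2::nat)}, {e \<in> E. \<phi> e \<ge> 1}))"
  have "bij_betw f A B"
  proof (rule bij_betw_byWitness[where f'=g])
    show "\<forall>a\<in>A. g (f a) = a"
    proof
      fix a assume "a \<in> A"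
      then obtain S T where a: "a = (S, T)" "S \<subseteq> T" "T \<subseteq> E" unfolding A_def by auto
      have 1: "{e \<in> E. (if e \<in> S then 1 else 0) + (if e \<in> T then 1 else (0::nat)) = 2} = S"
        using a by auto
      have 2: "{e \<in> E. (if e \<in> S then 1 else 0) + (if e \<in> T then 1 else (0::nat)) \<ge> 1} = T"
        using a by auto
      show "g (f a) = a" unfolding a(1) f_def g_def using a(2,3) by (auto simp: restrict_def)
    qed
    show "\<forall>b\<in>B. f (g b) = b"
    proof
      fix b assume b: "b \<in> B"
      show "f (g b) = b"
      proof
        fix e
        show "f (g b) e = b e"
        proof (cases "e \<in> E")
          case True
          have "\<forall>i\<in>E. b i \<in> {0::nat, 1, 2}" using b unfolding B_def PiE_iff by blast
          then have "b e \<in> {0::nat, 1, 2}" using True by blast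
          then consider "b e = 0" | "b e = 1" | "b e = 2" by auto
          then show ?thesis using True unfolding f_def g_def by cases simp_all
        next
          case False
          then show ?thesis using b PiE_arb[of b E] unfolding f_def g_def B_def by auto
        qed
      qed
    qed
    show "f ` A \<subseteq> B"
    proof
      fix y assume "y \<in> f ` A"
      then obtain S T where y: "y = f (S, T)" by auto
      have "\<forall>i\<in>E. (if i \<in> S then 1 else 0) + (if i \<in> T then 1 else (0::nat)) \<in> {0, 1, 2}" by auto
      then show "y \<in> B" unfolding y f_def B_def by (simp only: restrict_PiE_iff case_prod_conv)
    qed
    show "g ` B \<subseteq> A" unfolding g_def A_def B_def by auto
  qed
  then have "card A = card B" by (rule bij_betw_same_card)
  also have "card B = 3 ^ card E" unfolding B_def using fin by (simp add: card_PiE numeral_3_eq_3)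
  finally show ?thesis unfolding A_def .
qed

lemma card_OI_gen:
  assumes fin: "finite E"
  shows "card {(S, T). S \<subseteq> E \<and> T \<subseteq> E \<and> \<not> S \<subseteq> T \<and> \<not> T \<subseteq> S} + 2 * 3 ^ card E = 4 ^ card E + 2 ^ card E"
proof -
  define U where "U = Pow E \<times> Pow E"
  define C1 where "C1 = {(S, T). S \<subseteq> T \<and> T \<subseteq> E}"
  define C2 where "C2 = {(S, T). T \<subseteq> S \<and> S \<subseteq> E}"
  define D where "D = (\<lambda>S. (S, S)) ` Pow E"
  have finU: "finite U" unfolding U_def using fin by simp
  have cU: "card U = 4 ^ card E" unfolding U_def using fin
    by (simp add: card_cartesian_product card_Pow power_mult_distrib[symmetric])
  have sub: "C1 \<union> C2 \<subseteq> U" unfolding C1_def C2_def U_def by auto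
  have OI: "{(S, T). S \<subseteq> E \<and> T \<subseteq> E \<and> \<not> S \<subseteq> T \<and> \<not> T \<subseteq> S} = U - (C1 \<union> C2)"
    unfolding C1_def C2_def U_def by auto
  have c1: "card C1 = 3 ^ card E" unfolding C1_def by (rule card_chain[OF fin])
  have "C2 = prod.swap ` C1" unfolding C1_def C2_def by auto
  then have c2: "card C2 = 3 ^ card E" using c1 by (simp add: card_image)
  have "C1 \<inter> C2 = D" unfolding C1_def C2_def D_def by auto
  moreover have "card D = 2 ^ card E" unfolding D_def using fin
    by (subst card_image) (auto simp: inj_on_def card_Pow)
  ultimately have cI: "card (C1 \<inter> C2) = 2 ^ card E" by simp
  have finC: "finite C1" "finite C2" using sub finU finite_subset by auto
  have "card (C1 \<union> C2) + card (C1 \<inter> C2) = card C1 + card C2" using card_Un_Int[OF finC] by simp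
  then have cu: "card (C1 \<union> C2) + 2 ^ card E = 2 * 3 ^ card E" using c1 c2 cI by simp
  have "card (U - (C1 \<union> C2)) = card U - card (C1 \<union> C2)"
    using card_Diff_subset[OF finite_subset[OF sub finU] sub] .
  moreover have "card (C1 \<union> C2) \<le> card U" using card_mono[OF finU sub] .
  ultimately have "card (U - (C1 \<union> C2)) + card (C1 \<union> C2) = card U" by simp
  then show ?thesis unfolding OI using cu cU by linarith
qed

context TS
begin

lemma card_fiber:
  assumes "(S, T) \<in> OI"
  shows "card {x \<in> OI. (\<lambda>(S, T). binS S T) x = binS S T} = 2"
proof -
  have TS: "(T, S) \<in> OI" using assms unfolding OI_def by auto
  have "{x \<in> OI. (\<lambda>(S, T). binS S T) x = binS S T} = {(S, T), (T, S)}"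
  proof (rule set_eqI)
    fix z :: "'v set set \<times> 'v set set"
    obtain S' T' where z: "z = (S', T')" by (cases z)
    show "z \<in> {x \<in> OI. (\<lambda>(S, T). binS S T) x = binS S T} \<longleftrightarrow> z \<in> {(S, T), (T, S)}"
    proof
      assume "z \<in> {x \<in> OI. (\<lambda>(S, T). binS S T) x = binS S T}"
      then have "(S', T') \<in> OI" "binS S' T' = binS S T" using z by auto
      then show "z \<in> {(S, T), (T, S)}" using binS_eq_iff[OF assms] z by auto
    next
      assume "z \<in> {(S, T), (T, S)}"
      then show "z \<in> {x \<in> OI. (\<lambda>(S, T). binS S T) x = binS S T}" using assms TS binS_sym by auto
    qed
  qed
  moreover have "S \<noteq> T" using assms unfolding OI_def by auto
  ultimately show ?thesis by simp
qed

lemma card_Gset: "card OI = 2 * card Gset"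
proof -
  have "card OI = (\<Sum>y\<in>Gset. card {x \<in> OI. (\<lambda>(S, T). binS S T) x = y})"
    unfolding card_eq_sum Gset_def by (rule sum.image_gen[OF finOI])
  also have "\<dots> = (\<Sum>y\<in>Gset. 2)"
  proof (rule sum.cong[OF refl])
    fix y assume "y \<in> Gset"
    then obtain S T where "(S, T) \<in> OI" "y = binS S T" unfolding Gset_def by auto
    then show "card {x \<in> OI. (\<lambda>(S, T). binS S T) x = y} = 2" using card_fiber by simp
  qed
  finally show ?thesis by simp
qed

lemma card_Gset_formula: "card Gset + 3 ^ card E = 2 * 4 ^ (card E - 1) + 2 ^ (card E - 1)"
proof -
  have "card OI + 2 * 3 ^ card E = 4 ^ card E + 2 ^ card E"
    unfolding OI_def by (rule card_OI_gen[OF finE])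
  moreover have "card E \<ge> 1" using Ene finE by (simp add: Suc_leI card_gt_0_iff)
  then obtain k where k: "card E = Suc k" by (cases "card E") auto
  ultimately show ?thesis using card_Gset by simp
qed

end


theorem corollary4p2:
  fixes V :: "'v set" and E :: "'v set set" and n :: nat
  assumes "is_tree V E" and "card E = n" and "n \<ge> 1"
  shows "minimally_generated_by_quadrics (unordered_partitions V)
           (cut_ideal V E :: ('v set set, 'k::field) mpoly set)
           (nat (2 * 4 ^ (n - 1) + 2 ^ (n - 1) - 3 ^ n))"
proof -
  have Ene: "E \<noteq> {}" using assms(2,3) by auto
  interpret T: TS V E "TYPE('k)" using assms(1) Ene by unfold_locales
  have cnat: "card T.Gset + 3 ^ n = 2 * 4 ^ (n - 1) + 2 ^ (n - 1)"
    using T.card_Gset_formula assms(2) by simp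
  have "int (card T.Gset) = 2 * 4 ^ (n - 1) + 2 ^ (n - 1) - 3 ^ n"
  proof -
    have "int (card T.Gset + 3 ^ n) = int (2 * 4 ^ (n - 1) + 2 ^ (n - 1))" using cnat by simp
    then show ?thesis by simp
  qed
  then have N: "nat (2 * 4 ^ (n - 1) + 2 ^ (n - 1) - 3 ^ n) = card T.Gset" by simp
  show ?thesis unfolding minimally_generated_by_quadrics_def N
  proof (intro conjI allI impI)
    show "\<exists>G. finite G \<and> card G = card T.Gset \<and> (\<forall>g\<in>G. quadric g \<and> poly_in (unordered_partitions V) g) \<and>
        gen_ideal (unordered_partitions V) G = (cut_ideal V E :: ('v set set, 'k) mpoly set)"
      using T.finG T.G_props T.J_eq unfolding T.J_def by (intro exI[of _ T.Gset]) auto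
  next
    fix G :: "('v set set, 'k) mpoly set"
    assume "finite G \<and> (\<forall>g\<in>G. poly_in (unordered_partitions V) g) \<and> gen_ideal (unordered_partitions V) G = cut_ideal V E"
    then show "card T.Gset \<le> card G" using T.lower_bound by blast
  qed
qed

end
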